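(* Let $G$ be a quasitopological group and define groups with topology $G_\alpha$ (all with underlying group $G$) for ordinals $\alpha$ by transfinite recursion: $G_0=G$; $G_{\alpha}=c(G_{\alpha-1})$ if $\alpha$ is a successor ordinal; and, if $\alpha$ is a limit ordinal, $G_\alpha$ has topology $\bigcap_{\beta<\alpha}\mathcal T_{G_\beta}$, where $\mathcal T_{G_\beta}$ is the topology of $G_\beta$. Then each $G_\alpha$ is a quasitopological group, and there is an ordinal $\alpha$ such that $G_\alpha=\tau(G)$ (i.e. $\mathcal T_{G_\alpha}$ equals the topology of $\tau(G)$).
   Context: A quasitopological group is a group with a topology in which inversion is continuous and multiplication is separately continuous in each variable. For a quasitopological group $H$, $c(H)$ is the group $H$ with the quotient topology with respect to the multiplication map $\mu_H:H\times H\to H$. $F_M(S)$ is the free (Markov) topological group on a space $S$. For a group with topology $G$, $\tau(G)$ is $G$ with the quotient topology with respect to the multiplication epimorphism $m_G:F_M(G)\to G$ sending each generator $g$ to $g$. *)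

theory Defs
  imports "HOL-Analysis.Analysis" "HOL-Algebra.Group"
begin

definition group_with_topology :: "'g monoid \<Rightarrow> 'g topology \<Rightarrow> bool" where
  "group_with_topology G T \<longleftrightarrow> group G \<and> topspace T = carrier G"

definition quasitopological_group :: "'g monoid \<Rightarrow> 'g topology \<Rightarrow> bool" where
  "quasitopological_group G T \<longleftrightarrow> group_with_topology G T
     \<and> continuous_map T T (\<lambda>x. inv\<^bsub>G\<^esub> x)
     \<and> (\<forall>a \<in> carrier G. continuous_map T T (\<lambda>x. a \<otimes>\<^bsub>G\<^esub> x)
                      \<and> continuous_map T T (\<lambda>x. x \<otimes>\<^bsub>G\<^esub> a))"

definition topological_group :: "'g monoid \<Rightarrow> 'g topology \<Rightarrow> bool" where
  "topological_group G T \<longleftrightarrow> group_with_topology G T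
     \<and> continuous_map (prod_topology T T) T (\<lambda>(x, y). x \<otimes>\<^bsub>G\<^esub> y)
     \<and> continuous_map T T (\<lambda>x. inv\<^bsub>G\<^esub> x)"

text \<open>Quotient topology on the set S induced by a map f from X (intended with
  S = f ` topspace X): U is open iff U \<subseteq> S and its preimage is open in X.\<close>
definition quotient_topology :: "'a topology \<Rightarrow> ('a \<Rightarrow> 'b) \<Rightarrow> 'b set \<Rightarrow> 'b topology" where
  "quotient_topology X f S =
     topology (\<lambda>U. U \<subseteq> S \<and> openin X {x \<in> topspace X. f x \<in> U})"

definition c_top :: "'g monoid \<Rightarrow> 'g topology \<Rightarrow> 'g topology" where
  "c_top G T = quotient_topology (prod_topology T T) (\<lambda>(x, y). x \<otimes>\<^bsub>G\<^esub> y) (carrier G)"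

text \<open>Words: a letter (x, True) stands for x, (x, False) for x^-1.\<close>
type_synonym 'a word = "('a \<times> bool) list"

fun red_cons :: "'a \<times> bool \<Rightarrow> 'a word \<Rightarrow> 'a word" where
  "red_cons x [] = [x]"
| "red_cons x (y # ys) = (if fst x = fst y \<and> snd x \<noteq> snd y then ys else x # y # ys)"

definition reduce :: "'a word \<Rightarrow> 'a word" where
  "reduce w = foldr red_cons w []"

definition free_group :: "'a set \<Rightarrow> 'a word monoid" where
  "free_group S = \<lparr>carrier = {w. reduce w = w \<and> fst ` set w \<subseteq> S},
                   monoid.mult = (\<lambda>v w. reduce (v @ w)), one = []\<rparr>"

definition free_gen :: "'a \<Rightarrow> 'a word" where
  "free_gen x = [(x, True)]"

text \<open>F_M(X): the free group on topspace X carrying the finest group topology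
  for which the canonical map X \<rightarrow> F(X) is continuous (Markov free topological group).\<close>
definition FM_top :: "'a topology \<Rightarrow> 'a word topology" where
  "FM_top X = topology_generated_by
     (\<Union> {{U. openin T U} | T. topological_group (free_group (topspace X)) T
                               \<and> continuous_map X T free_gen})"

definition mult_epi :: "'g monoid \<Rightarrow> 'g word \<Rightarrow> 'g" where
  "mult_epi G w = foldr (\<lambda>(x, b) a. (if b then x else inv\<^bsub>G\<^esub> x) \<otimes>\<^bsub>G\<^esub> a) w \<one>\<^bsub>G\<^esub>"

definition tau_top :: "'g monoid \<Rightarrow> 'g topology \<Rightarrow> 'g topology" where
  "tau_top G T = quotient_topology (FM_top T) (mult_epi G) (carrier G)"

text \<open>S is the transfinite sequence of topologies G_alpha, indexed by the
  well-ordered type 'i (an initial segment of the ordinals):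
  value T at the least index, c(previous) at successors, and at limits the
  intersection of all earlier topologies.\<close>
definition transfinite_seq :: "'g monoid \<Rightarrow> 'g topology \<Rightarrow> ('i::wellorder \<Rightarrow> 'g topology) \<Rightarrow> bool" where
  "transfinite_seq G T S \<longleftrightarrow>
     (\<forall>i. (\<forall>j. \<not> j < i) \<longrightarrow> S i = T)
   \<and> (\<forall>i j. j < i \<and> \<not> (\<exists>k. j < k \<and> k < i) \<longrightarrow> S i = c_top G (S j))
   \<and> (\<forall>i. (\<exists>j. j < i) \<and> (\<forall>j. j < i \<longrightarrow> (\<exists>k. j < k \<and> k < i))
          \<longrightarrow> S i = topology (\<lambda>U. \<forall>j. j < i \<longrightarrow> openin (S j) U))"

end

theory Submission
  imports Defs
begin


definition flipl :: "'a \<times> bool \<Rightarrow> 'a \<times> bool" where "flipl x = (fst x, \<not> snd x)"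

fun redw :: "'a word \<Rightarrow> bool" where
  "redw [] = True"
| "redw [x] = True"
| "redw (x # y # ys) = (\<not> (fst x = fst y \<and> snd x \<noteq> snd y) \<and> redw (y # ys))"

lemma redw_tl: "redw (x # ys) \<Longrightarrow> redw ys"
  by (cases ys) auto

lemma redw_red_cons: "redw z \<Longrightarrow> redw (red_cons x z)"
proof (cases z)
  case (Cons y ys) assume "redw z" then show ?thesis using Cons by (auto intro: redw_tl)
qed auto

definition act :: "'a word \<Rightarrow> 'a word \<Rightarrow> 'a word" where "act u z = foldr red_cons u z"

lemma act_simps[simp]: "act [] z = z" "act (x # u) z = red_cons x (act u z)" "act (u @ v) z = act u (act v z)"
  by (auto simp: act_def)

lemma redw_act: "redw z \<Longrightarrow> redw (act u z)"
  by (induction u) (auto intro: redw_red_cons)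

lemma reduce_act: "reduce w = act w []" by (simp add: reduce_def act_def)

lemma redw_reduce: "redw (reduce w)" by (simp add: reduce_act redw_act)

lemma reduce_redw: "redw z \<Longrightarrow> reduce z = z"
proof (induction z)
  case (Cons x z)
  then have "reduce z = z" by (auto intro: redw_tl)
  then show ?case using Cons.prems by (cases z) (auto simp: reduce_act)
qed (simp add: reduce_def)

lemma reduce_fix_iff: "reduce w = w \<longleftrightarrow> redw w"
  by (metis redw_reduce reduce_redw)

lemma red_cons_cancel: "redw z \<Longrightarrow> red_cons x (red_cons (flipl x) z) = z"
proof (cases z)
  case Nil then show ?thesis by (simp add: flipl_def)
next
  case (Cons y ys)
  assume r: "redw z"
  show ?thesis
  proof (cases "fst (flipl x) = fst y \<and> snd (flipl x) \<noteq> snd y")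
    case True
    then have xy: "x = y" by (cases x; cases y; auto simp: flipl_def)
    show ?thesis
    proof (cases ys)
      case (Cons y' ys')
      then show ?thesis using True xy r \<open>z = y # ys\<close> by auto
    qed (use True xy \<open>z = y # ys\<close> in auto)
  next
    case False
    then show ?thesis using Cons by (auto simp: flipl_def)
  qed
qed

lemma act_reduce: "redw z \<Longrightarrow> act (reduce u) z = act u z"
proof (induction u)
  case Nil then show ?case by (simp add: reduce_def)
next
  case (Cons x u)
  define r where "r = reduce u"
  have rr: "redw r" by (simp add: r_def redw_reduce)
  have IH: "act r z = act u z" using Cons by (simp add: r_def)
  have ru: "reduce (x # u) = red_cons x r" by (simp add: r_def reduce_act)
  show ?case
  proof (cases r)
    case Nil then show ?thesis using ru IH by simp
  next
    case (Cons y r')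
    show ?thesis
    proof (cases "fst x = fst y \<and> snd x \<noteq> snd y")
      case True
      then have y: "y = flipl x" by (cases x; cases y; auto simp: flipl_def)
      have "act (x # u) z = red_cons x (red_cons (flipl x) (act r' z))"
        using IH Cons y by simp
      also have "\<dots> = act r' z" by (rule red_cons_cancel[OF redw_act[OF Cons.prems]])
      moreover have "reduce (x#u) = r'" using ru Cons True by simp
      ultimately show ?thesis by simp
    next
      case False
      then have "reduce (x#u) = x # r" using ru Cons by auto
      then show ?thesis using IH by simp
    qed
  qed
qed

definition winv :: "'a word \<Rightarrow> 'a word" where "winv w = rev (map flipl w)"

lemma flipl_flipl[simp]: "flipl (flipl x) = x" by (simp add: flipl_def)

lemma winv_winv[simp]: "winv (winv w) = w" by (induction w) (auto simp: winv_def)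

lemma act_winv: "redw z \<Longrightarrow> act (winv u) (act u z) = z"
proof (induction u)
  case (Cons x u)
  have "act (winv (x # u)) (act (x # u) z) = act (winv u) (red_cons (flipl x) (red_cons (flipl (flipl x)) (act u z)))"
    by (simp add: winv_def)
  also have "\<dots> = act (winv u) (act u z)"
    using red_cons_cancel[OF redw_act[OF Cons.prems], of "flipl x" u] by simp
  finally show ?case using Cons by simp
qed (simp add: winv_def)

lemma set_red_cons: "set (red_cons x z) \<subseteq> insert x (set z)"
  by (cases z) auto

lemma set_act: "set (act u z) \<subseteq> set u \<union> set z"
  by (induction u) (use set_red_cons in fastforce)+

lemma carrier_free_group: "carrier (free_group S) = {w. redw w \<and> fst ` set w \<subseteq> S}"
  by (auto simp: free_group_def reduce_fix_iff)

lemma mult_free_group: "v \<otimes>\<^bsub>free_group S\<^esub> w = reduce (v @ w)"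
  by (simp add: free_group_def)

lemma one_free_group: "\<one>\<^bsub>free_group S\<^esub> = []"
  by (simp add: free_group_def)

lemma mult_free_group_act: "redw w \<Longrightarrow> v \<otimes>\<^bsub>free_group S\<^esub> w = act v w"
proof -
  assume "redw w"
  have "reduce (v@w) = act v (reduce w)" by (simp add: reduce_act)
  then show ?thesis using \<open>redw w\<close> by (simp add: mult_free_group reduce_redw)
qed

lemma free_group_closed:
  assumes "v \<in> carrier (free_group S)" "w \<in> carrier (free_group S)"
  shows "v \<otimes>\<^bsub>free_group S\<^esub> w \<in> carrier (free_group S)"
proof -
  have "set (reduce (v @ w)) \<subseteq> set v \<union> set w" using set_act[of "v@w" "[]"] by (auto simp: reduce_act)
  then have "fst ` set (reduce (v @ w)) \<subseteq> fst ` set v \<union> fst ` set w" by blast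
  then have "fst ` set (reduce (v @ w)) \<subseteq> S" using assms unfolding carrier_free_group by blast
  then show ?thesis by (auto simp: carrier_free_group mult_free_group redw_reduce)
qed

lemma group_free_group: "group (free_group S)"
proof (rule groupI)
  let ?F = "free_group S"
  show "\<And>x y. x \<in> carrier ?F \<Longrightarrow> y \<in> carrier ?F \<Longrightarrow> x \<otimes>\<^bsub>?F\<^esub> y \<in> carrier ?F"
    by (rule free_group_closed)
  show "\<one>\<^bsub>?F\<^esub> \<in> carrier ?F" by (simp add: one_free_group carrier_free_group)
  show "x \<otimes>\<^bsub>?F\<^esub> y \<otimes>\<^bsub>?F\<^esub> z = x \<otimes>\<^bsub>?F\<^esub> (y \<otimes>\<^bsub>?F\<^esub> z)"
    if "x \<in> carrier ?F" "y \<in> carrier ?F" "z \<in> carrier ?F" for x y z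
  proof -
    have rz: "redw z" using that by (simp add: carrier_free_group)
    have "x \<otimes>\<^bsub>?F\<^esub> y \<otimes>\<^bsub>?F\<^esub> z = act (reduce (x @ y)) z" by (subst mult_free_group_act[OF rz]) (simp add: mult_free_group)
    also have "\<dots> = act x (act y z)" using rz by (simp add: act_reduce)
    also have "\<dots> = x \<otimes>\<^bsub>?F\<^esub> (y \<otimes>\<^bsub>?F\<^esub> z)" using rz redw_act[OF rz, of y]
      by (simp add: mult_free_group_act)
    finally show ?thesis .
  qed
  show "\<one>\<^bsub>?F\<^esub> \<otimes>\<^bsub>?F\<^esub> x = x" if "x \<in> carrier ?F" for x
    using that by (simp add: one_free_group mult_free_group carrier_free_group reduce_redw)
  show "\<exists>y\<in>carrier ?F. y \<otimes>\<^bsub>?F\<^esub> x = \<one>\<^bsub>?F\<^esub>" if "x \<in> carrier ?F" for x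
  proof (intro bexI)
    have rx: "redw x" using that by (simp add: carrier_free_group)
    show "reduce (winv x) \<otimes>\<^bsub>?F\<^esub> x = \<one>\<^bsub>?F\<^esub>"
    proof -
      have "reduce (winv x) \<otimes>\<^bsub>?F\<^esub> x = act (winv x) x" using rx by (simp add: mult_free_group_act act_reduce)
      also have "act (winv x) x = act (winv x) (act x [])" using rx by (metis reduce_act reduce_redw)
      finally show ?thesis using act_winv[of "[]" x] by (simp add: one_free_group)
    qed
    have "set (reduce (winv x)) \<subseteq> set (winv x)" using set_act[of "winv x" "[]"] by (simp add: reduce_act)
    moreover have "fst ` set (winv x) = fst ` set x" by (force simp: winv_def flipl_def image_iff)
    ultimately show "reduce (winv x) \<in> carrier ?F" using that by (auto simp: carrier_free_group redw_reduce)
  qed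
qed



lemma mult_epi_Nil[simp]: "mult_epi G [] = \<one>\<^bsub>G\<^esub>" by (simp add: mult_epi_def)
lemma mult_epi_Cons[simp]: "mult_epi G ((a,b) # w) = (if b then a else inv\<^bsub>G\<^esub> a) \<otimes>\<^bsub>G\<^esub> mult_epi G w"
  by (simp add: mult_epi_def)

lemma fst_set_act: "fst ` set (act u z) \<subseteq> fst ` set u \<union> fst ` set z"
  using set_act[of u z] by blast

locale mgroup = group G for G :: "'a monoid" (structure)

context mgroup begin

lemma mult_epi_closed: "fst ` set w \<subseteq> carrier G \<Longrightarrow> mult_epi G w \<in> carrier G"
  by (induction w) auto

lemma mult_epi_red_cons:
  assumes "fst x \<in> carrier G" "fst ` set z \<subseteq> carrier G"
  shows "mult_epi G (red_cons x z) = mult_epi G [x] \<otimes> mult_epi G z"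
proof (cases z)
  case Nil then show ?thesis using assms by (cases x) auto
next
  case (Cons y ys)
  obtain a b where x: "x = (a,b)" by (cases x)
  obtain c d where y: "y = (c,d)" by (cases y)
  have ys: "mult_epi G ys \<in> carrier G" using assms Cons by (auto intro!: mult_epi_closed)
  show ?thesis
  proof (cases "a = c \<and> b \<noteq> d")
    case True
    then show ?thesis using Cons x y assms ys
      by (auto simp: m_assoc[symmetric])
  next
    case False
    then show ?thesis using Cons x y assms ys by (auto simp: m_assoc)
  qed
qed

lemma mult_epi_act:
  assumes "fst ` set u \<subseteq> carrier G" "fst ` set z \<subseteq> carrier G"
  shows "mult_epi G (act u z) = mult_epi G u \<otimes> mult_epi G z"
  using assms
proof (induction u)
  case Nil then show ?case by (simp add: mult_epi_closed)
next
  case (Cons x u)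
  have su: "fst ` set (act u z) \<subseteq> carrier G" using fst_set_act[of u z] Cons.prems by (simp add: subset_iff) blast
  obtain a b where x: "x = (a,b)" by (cases x)
  have "mult_epi G (act (x # u) z) = mult_epi G [x] \<otimes> (mult_epi G u \<otimes> mult_epi G z)"
    using Cons su by (simp add: mult_epi_red_cons)
  then show ?case using Cons.prems x by (auto simp: m_assoc mult_epi_closed)
qed

lemma mult_epi_hom: "mult_epi G \<in> hom (free_group (carrier G)) G"
proof (rule homI)
  fix x assume "x \<in> carrier (free_group (carrier G))"
  then show "mult_epi G x \<in> carrier G" by (simp add: carrier_free_group mult_epi_closed)
next
  fix x y assume "x \<in> carrier (free_group (carrier G))" "y \<in> carrier (free_group (carrier G))"
  then show "mult_epi G (x \<otimes>\<^bsub>free_group (carrier G)\<^esub> y) = mult_epi G x \<otimes> mult_epi G y"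
    by (simp add: carrier_free_group mult_free_group_act mult_epi_act)
qed

lemma mult_epi_group_hom: "group_hom (free_group (carrier G)) G (mult_epi G)"
  by (simp add: group_hom_def group_hom_axioms_def group_free_group mult_epi_hom is_group)



lemma mult_epi_free_gen: "x \<in> carrier G \<Longrightarrow> mult_epi G (free_gen x) = x"
  by (simp add: free_gen_def)

end

lemma mgroup_iff: "mgroup G \<longleftrightarrow> group G" by (simp add: mgroup_def)
lemma free_gen_carrier: "x \<in> S \<Longrightarrow> free_gen x \<in> carrier (free_group S)"
  by (simp add: free_gen_def carrier_free_group)



lemma istopology_quotient: "istopology (\<lambda>U. U \<subseteq> S \<and> openin X {x \<in> topspace X. f x \<in> U})"
  unfolding istopology_def
proof (rule conjI; intro allI impI)
  fix U V assume "U \<subseteq> S \<and> openin X {x \<in> topspace X. f x \<in> U}" "V \<subseteq> S \<and> openin X {x \<in> topspace X. f x \<in> V}"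
  moreover have "{x \<in> topspace X. f x \<in> U \<inter> V} = {x \<in> topspace X. f x \<in> U} \<inter> {x \<in> topspace X. f x \<in> V}" by auto
  ultimately show "U \<inter> V \<subseteq> S \<and> openin X {x \<in> topspace X. f x \<in> U \<inter> V}" by auto
next
  fix K assume K: "\<forall>U\<in>K. U \<subseteq> S \<and> openin X {x \<in> topspace X. f x \<in> U}"
  have "{x \<in> topspace X. f x \<in> \<Union>K} = \<Union>((\<lambda>U. {x \<in> topspace X. f x \<in> U}) ` K)" by auto
  moreover have "openin X (\<Union>((\<lambda>U. {x \<in> topspace X. f x \<in> U}) ` K))" using K by auto
  ultimately show "\<Union>K \<subseteq> S \<and> openin X {x \<in> topspace X. f x \<in> \<Union>K}" using K by auto
qed

lemma openin_quotient: "openin (quotient_topology X f S) U \<longleftrightarrow> U \<subseteq> S \<and> openin X {x \<in> topspace X. f x \<in> U}"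
  unfolding quotient_topology_def topology_inverse'[OF istopology_quotient] by simp

lemma topspace_quotient:
  assumes "f ` topspace X \<subseteq> S" shows "topspace (quotient_topology X f S) = S"
proof -
  have "{x \<in> topspace X. f x \<in> S} = topspace X" using assms by auto
  then have "openin (quotient_topology X f S) S" by (simp add: openin_quotient)
  then show ?thesis using openin_subset by (auto simp: openin_quotient topspace_def)
qed

lemma istopology_inter: "istopology (\<lambda>U. \<forall>j. P j \<longrightarrow> openin (Sj j) U)"
  unfolding istopology_def by auto

lemma openin_inter_top: "openin (topology (\<lambda>U. \<forall>j. P j \<longrightarrow> openin (Sj j) U)) U \<longleftrightarrow> (\<forall>j. P j \<longrightarrow> openin (Sj j) U)"
  unfolding topology_inverse'[OF istopology_inter] by simp

lemma prod_mono_open: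
  assumes "\<And>U. openin X U \<Longrightarrow> openin X' U" "\<And>U. openin Y U \<Longrightarrow> openin Y' U"
    and "openin (prod_topology X Y) W"
  shows "openin (prod_topology X' Y') W"
  using assms(3) unfolding openin_prod_topology_alt by (meson assms(1,2))

lemma continuous_coarser:
  assumes "\<And>U. openin Y U \<Longrightarrow> openin X U" "topspace X = topspace Y"
  shows "continuous_map X Y (\<lambda>x. x)"
  unfolding continuous_map_def
proof (intro conjI allI impI)
  show "(\<lambda>x. x) \<in> topspace X \<rightarrow> topspace Y" using assms(2) by auto
  fix U assume U: "openin Y U"
  then have "{x \<in> topspace X. x \<in> U} = U" using openin_subset[OF U] assms(2) by auto
  then show "openin X {x \<in> topspace X. x \<in> U}" using assms(1)[OF U] by simp
qed



lemma qt_group: "quasitopological_group G H \<Longrightarrow> group G"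
  and qt_top: "quasitopological_group G H \<Longrightarrow> topspace H = carrier G"
  by (auto simp: quasitopological_group_def group_with_topology_def)

lemma grp_m_closed: "group G \<Longrightarrow> x \<in> carrier G \<Longrightarrow> y \<in> carrier G \<Longrightarrow> x \<otimes>\<^bsub>G\<^esub> y \<in> carrier G"
  by (simp add: group.is_monoid monoid.m_closed)

lemma grp_one_closed: "group G \<Longrightarrow> \<one>\<^bsub>G\<^esub> \<in> carrier G"
  by (simp add: group.is_monoid monoid.one_closed)
lemma grp_r_one: "group G \<Longrightarrow> x \<in> carrier G \<Longrightarrow> x \<otimes>\<^bsub>G\<^esub> \<one>\<^bsub>G\<^esub> = x"
  by (simp add: group.is_monoid monoid.r_one)
lemma grp_m_assoc: "group G \<Longrightarrow> x \<in> carrier G \<Longrightarrow> y \<in> carrier G \<Longrightarrow> z \<in> carrier G \<Longrightarrow> x \<otimes>\<^bsub>G\<^esub> y \<otimes>\<^bsub>G\<^esub> z = x \<otimes>\<^bsub>G\<^esub> (y \<otimes>\<^bsub>G\<^esub> z)"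
  by (simp add: group.is_monoid monoid.m_assoc)

lemma openin_c_top: "openin (c_top G H) U \<longleftrightarrow> U \<subseteq> carrier G \<and>
   openin (prod_topology H H) {z \<in> topspace (prod_topology H H). (\<lambda>(x,y). x \<otimes>\<^bsub>G\<^esub> y) z \<in> U}"
  by (simp add: c_top_def openin_quotient)

lemma topspace_c_top: "quasitopological_group G H \<Longrightarrow> topspace (c_top G H) = carrier G"
  unfolding c_top_def
  by (rule topspace_quotient) (auto simp: qt_top intro: grp_m_closed[OF qt_group])

lemma c_top_coarser:
  assumes qt: "quasitopological_group G H" and U: "openin (c_top G H) U"
  shows "openin H U"
proof -
  have grp: "group G" using qt by (rule qt_group)
  have ts: "topspace H = carrier G" using qt by (rule qt_top)
  let ?W = "{z \<in> topspace (prod_topology H H). (\<lambda>(x,y). x \<otimes>\<^bsub>G\<^esub> y) z \<in> U}"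
  have sub: "U \<subseteq> carrier G" and W: "openin (prod_topology H H) ?W" using U by (auto simp: openin_c_top)
  have "continuous_map H (prod_topology H H) (\<lambda>x. (x, \<one>\<^bsub>G\<^esub>))"
    by (intro continuous_map_pairedI) (simp_all add: ts grp_one_closed[OF grp])
  then have "openin H {x \<in> topspace H. (x, \<one>\<^bsub>G\<^esub>) \<in> ?W}" using W unfolding continuous_map_def by blast
  moreover have "{x \<in> topspace H. (x, \<one>\<^bsub>G\<^esub>) \<in> ?W} = U"
    using sub by (auto simp: ts grp_r_one[OF grp] grp_one_closed[OF grp])
  ultimately show ?thesis by simp
qed

lemma c_top_cont:
  assumes qt: "quasitopological_group G H"
    and fc: "\<And>x. x \<in> carrier G \<Longrightarrow> f x \<in> carrier G"
    and hc: "continuous_map (prod_topology H H) (prod_topology H H) h"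
    and hm: "\<And>x y. x \<in> carrier G \<Longrightarrow> y \<in> carrier G \<Longrightarrow> (\<lambda>(a,b). a \<otimes>\<^bsub>G\<^esub> b) (h (x,y)) = f (x \<otimes>\<^bsub>G\<^esub> y)"
  shows "continuous_map (c_top G H) (c_top G H) f"
  unfolding continuous_map_def
proof (intro conjI allI impI)
  have grp: "group G" using qt by (rule qt_group)
  have ts: "topspace H = carrier G" using qt by (rule qt_top)
  show "f \<in> topspace (c_top G H) \<rightarrow> topspace (c_top G H)" using fc by (simp add: topspace_c_top[OF qt])
  fix U assume U: "openin (c_top G H) U"
  let ?W = "{z \<in> topspace (prod_topology H H). (\<lambda>(x,y). x \<otimes>\<^bsub>G\<^esub> y) z \<in> U}"
  have W: "openin (prod_topology H H) ?W" using U by (auto simp: openin_c_top)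
  have "openin (prod_topology H H) {z \<in> topspace (prod_topology H H). h z \<in> ?W}"
    using hc W unfolding continuous_map_def by blast
  moreover have "{z \<in> topspace (prod_topology H H). h z \<in> ?W} =
     {z \<in> topspace (prod_topology H H). (\<lambda>(x,y). x \<otimes>\<^bsub>G\<^esub> y) z \<in> {x \<in> topspace (c_top G H). f x \<in> U}}"
  proof (intro equalityI subsetI)
    fix z assume z: "z \<in> {z \<in> topspace (prod_topology H H). h z \<in> ?W}"
    obtain x y where "z = (x,y)" by (cases z)
    then show "z \<in> {z \<in> topspace (prod_topology H H). (\<lambda>(x,y). x \<otimes>\<^bsub>G\<^esub> y) z \<in> {x \<in> topspace (c_top G H). f x \<in> U}}"
      using z hm[of x y] by (auto simp: ts topspace_c_top[OF qt] grp_m_closed[OF grp] split: prod.splits)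
  next
    fix z assume z: "z \<in> {z \<in> topspace (prod_topology H H). (\<lambda>(x,y). x \<otimes>\<^bsub>G\<^esub> y) z \<in> {x \<in> topspace (c_top G H). f x \<in> U}}"
    obtain x y where xy: "z = (x,y)" by (cases z)
    have "h z \<in> topspace (prod_topology H H)" using hc z unfolding continuous_map_def by blast
    then show "z \<in> {z \<in> topspace (prod_topology H H). h z \<in> ?W}"
      using z hm[of x y] xy by (auto simp: ts split: prod.splits)
  qed
  ultimately have "openin (prod_topology H H) {z \<in> topspace (prod_topology H H). (\<lambda>(x,y). x \<otimes>\<^bsub>G\<^esub> y) z \<in> {x \<in> topspace (c_top G H). f x \<in> U}}"
    by simp
  then show "openin (c_top G H) {x \<in> topspace (c_top G H). f x \<in> U}"
    by (simp add: openin_c_top topspace_c_top[OF qt])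
qed

lemma c_top_qt:
  assumes qt: "quasitopological_group G H"
  shows "quasitopological_group G (c_top G H)"
proof -
  have grp: "group G" using qt by (rule qt_group)
  have ts: "topspace H = carrier G" using qt by (rule qt_top)
  have inv: "continuous_map H H (\<lambda>x. inv\<^bsub>G\<^esub> x)" and
    tr: "\<And>a. a \<in> carrier G \<Longrightarrow> continuous_map H H (\<lambda>x. a \<otimes>\<^bsub>G\<^esub> x) \<and> continuous_map H H (\<lambda>x. x \<otimes>\<^bsub>G\<^esub> a)"
    using qt by (auto simp: quasitopological_group_def)
  have "continuous_map (c_top G H) (c_top G H) (\<lambda>x. inv\<^bsub>G\<^esub> x)"
  proof (rule c_top_cont[OF qt, where h="\<lambda>z. (inv\<^bsub>G\<^esub> (snd z), inv\<^bsub>G\<^esub> (fst z))"])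
    show "continuous_map (prod_topology H H) (prod_topology H H) (\<lambda>z. (inv\<^bsub>G\<^esub> (snd z), inv\<^bsub>G\<^esub> (fst z)))"
      by (intro continuous_map_pairedI continuous_map_compose[OF continuous_map_snd inv, unfolded o_def]
          continuous_map_compose[OF continuous_map_fst inv, unfolded o_def])
  qed (auto simp: group.inv_mult_group[OF grp] grp)
  moreover have "continuous_map (c_top G H) (c_top G H) (\<lambda>x. a \<otimes>\<^bsub>G\<^esub> x) \<and> continuous_map (c_top G H) (c_top G H) (\<lambda>x. x \<otimes>\<^bsub>G\<^esub> a)"
    if a: "a \<in> carrier G" for a
  proof
    show "continuous_map (c_top G H) (c_top G H) (\<lambda>x. a \<otimes>\<^bsub>G\<^esub> x)"
    proof (rule c_top_cont[OF qt, where h="\<lambda>z. (a \<otimes>\<^bsub>G\<^esub> fst z, snd z)"])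
      show "continuous_map (prod_topology H H) (prod_topology H H) (\<lambda>z. (a \<otimes>\<^bsub>G\<^esub> fst z, snd z))"
        using tr[OF a] by (intro continuous_map_pairedI continuous_map_snd continuous_map_compose[OF continuous_map_fst, unfolded o_def]) auto
    qed (auto simp: grp_m_assoc[OF grp] a grp_m_closed[OF grp])
    show "continuous_map (c_top G H) (c_top G H) (\<lambda>x. x \<otimes>\<^bsub>G\<^esub> a)"
    proof (rule c_top_cont[OF qt, where h="\<lambda>z. (fst z, snd z \<otimes>\<^bsub>G\<^esub> a)"])
      show "continuous_map (prod_topology H H) (prod_topology H H) (\<lambda>z. (fst z, snd z \<otimes>\<^bsub>G\<^esub> a))"
        using tr[OF a] by (intro continuous_map_pairedI continuous_map_fst continuous_map_compose[OF continuous_map_snd, unfolded o_def]) auto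
    qed (auto simp: grp_m_assoc[OF grp] a grp_m_closed[OF grp])
  qed
  ultimately show ?thesis
    by (auto simp: quasitopological_group_def group_with_topology_def grp topspace_c_top[OF qt])
qed

lemma lim_top:
  assumes "\<exists>j. P j" "\<And>j. P j \<Longrightarrow> topspace (Sj j) = A"
  shows "topspace (topology (\<lambda>U. \<forall>j. P j \<longrightarrow> openin (Sj j) U)) = A"
proof -
  obtain j0 where j0: "P j0" using assms(1) by blast
  have "openin (topology (\<lambda>U. \<forall>j. P j \<longrightarrow> openin (Sj j) U)) A"
  proof -
    have "\<forall>j. P j \<longrightarrow> openin (Sj j) A" using assms(2) openin_topspace by metis
    then show ?thesis by (simp add: openin_inter_top)
  qed
  moreover have "openin (topology (\<lambda>U. \<forall>j. P j \<longrightarrow> openin (Sj j) U)) U \<Longrightarrow> U \<subseteq> A" for U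
    using j0 assms(2)[OF j0] openin_subset by (fastforce simp: openin_inter_top)
  ultimately show ?thesis by (metis openin_subset openin_topspace subset_antisym)
qed

lemma lim_cont:
  assumes "\<exists>j. P j" "\<And>j. P j \<Longrightarrow> topspace (Sj j) = A" "\<And>x. x \<in> A \<Longrightarrow> f x \<in> A"
    "\<And>j. P j \<Longrightarrow> continuous_map (Sj j) (Sj j) f"
  shows "continuous_map (topology (\<lambda>U. \<forall>j. P j \<longrightarrow> openin (Sj j) U)) (topology (\<lambda>U. \<forall>j. P j \<longrightarrow> openin (Sj j) U)) f"
proof -
  let ?X = "topology (\<lambda>U. \<forall>j. P j \<longrightarrow> openin (Sj j) U)"
  have tsX: "topspace ?X = A" by (rule lim_top[OF assms(1,2)])
  have "openin ?X {x \<in> A. f x \<in> U}" if U: "openin ?X U" for U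
  proof -
    have "\<forall>j. P j \<longrightarrow> openin (Sj j) U" using U by (simp add: openin_inter_top)
    then show ?thesis
      using assms(2,4) unfolding openin_inter_top continuous_map_def by metis
  qed
  then show ?thesis unfolding continuous_map_def tsX using assms(3) by auto
qed

lemma lim_qt:
  assumes "\<exists>j. P j" "\<And>j. P j \<Longrightarrow> quasitopological_group G (Sj j)"
  shows "quasitopological_group G (topology (\<lambda>U. \<forall>j. P j \<longrightarrow> openin (Sj j) U))"
proof -
  obtain j0 where j0: "P j0" using assms(1) by blast
  have grp: "group G" using assms(2)[OF j0] by (rule qt_group)
  have ts: "\<And>j. P j \<Longrightarrow> topspace (Sj j) = carrier G" using assms(2) qt_top by blast
  show ?thesis
    unfolding quasitopological_group_def group_with_topology_def
    using assms(1) ts assms(2) grp grp_m_closed[OF grp]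
    by (auto simp: lim_top[OF assms(1) ts] intro!: lim_cont[OF assms(1) ts]
        simp add: quasitopological_group_def)
qed



definition famFM :: "'a topology \<Rightarrow> 'a word topology set" where
  "famFM X = {Tf. topological_group (free_group (topspace X)) Tf \<and> continuous_map X Tf free_gen}"

lemma in_FM_basis: "U \<in> \<Union> {{U. openin Tf U} | Tf. topological_group (free_group (topspace X)) Tf \<and> continuous_map X Tf free_gen}
   \<longleftrightarrow> (\<exists>Tf \<in> famFM X. openin Tf U)"
  by (auto simp: famFM_def)

lemma fam_top: "Tf \<in> famFM X \<Longrightarrow> topspace Tf = carrier (free_group (topspace X))"
  by (simp add: famFM_def topological_group_def group_with_topology_def)

lemma fm_basis: "Tf \<in> famFM X \<Longrightarrow> openin Tf U \<Longrightarrow> openin (FM_top X) U"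
  unfolding FM_top_def by (rule topology_generated_by_Basis) (auto simp: famFM_def)

definition indisc :: "'a set \<Rightarrow> 'a topology" where
  "indisc A = topology (\<lambda>U. U = {} \<or> U = A)"

lemma openin_indisc: "openin (indisc A) U \<longleftrightarrow> U = {} \<or> U = A"
proof -
  have "istopology (\<lambda>U. U = {} \<or> U = A)"
    unfolding istopology_def
  proof (rule conjI; intro allI impI)
    fix K :: "'a set set" assume "\<forall>U\<in>K. U = {} \<or> U = A"
    then show "\<Union>K = {} \<or> \<Union>K = A" by (cases "A \<in> K") auto
  qed auto
  then show ?thesis by (simp add: indisc_def)
qed

lemma topspace_indisc: "topspace (indisc A) = A"
  by (auto simp: topspace_def openin_indisc)

lemma cont_indisc: "f ` topspace Y \<subseteq> A \<Longrightarrow> continuous_map Y (indisc A) f"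
  unfolding continuous_map_def topspace_indisc openin_indisc
proof (intro conjI allI impI)
  fix U assume A: "f ` topspace Y \<subseteq> A" and U: "U = {} \<or> U = A"
  show "openin Y {x \<in> topspace Y. f x \<in> U}"
  proof (cases "U = {}")
    case False
    then have "{x \<in> topspace Y. f x \<in> U} = topspace Y" using U A by auto
    then show ?thesis by simp
  qed simp
qed auto

lemma indisc_fam: "indisc (carrier (free_group (topspace X))) \<in> famFM X"
  unfolding famFM_def topological_group_def group_with_topology_def
  by (auto simp: group_free_group topspace_indisc intro!: cont_indisc free_gen_carrier
      grp_m_closed[OF group_free_group] group.inv_closed[OF group_free_group])

lemma topspace_FM: "topspace (FM_top X) = carrier (free_group (topspace X))"
proof -
  have "topspace (FM_top X) = \<Union> (\<Union> {{U. openin Tf U} | Tf. topological_group (free_group (topspace X)) Tf \<and> continuous_map X Tf free_gen})"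
    unfolding FM_top_def by simp
  also have "\<dots> = carrier (free_group (topspace X))"
  proof
    show "\<Union> (\<Union> {{U. openin Tf U} | Tf. topological_group (free_group (topspace X)) Tf \<and> continuous_map X Tf free_gen}) \<subseteq> carrier (free_group (topspace X))"
      using openin_subset fam_top unfolding famFM_def by fastforce
    have "carrier (free_group (topspace X)) \<in> \<Union> {{U. openin Tf U} | Tf. topological_group (free_group (topspace X)) Tf \<and> continuous_map X Tf free_gen}"
      unfolding in_FM_basis using indisc_fam by (metis openin_indisc)
    then show "carrier (free_group (topspace X)) \<subseteq> \<Union> (\<Union> {{U. openin Tf U} | Tf. topological_group (free_group (topspace X)) Tf \<and> continuous_map X Tf free_gen})"
      by blast
  qed
  finally show ?thesis .
qed

lemma free_gen_cont: "continuous_map X (FM_top X) free_gen"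
  unfolding FM_top_def
proof (rule continuous_on_generated_topo)
  fix U assume "U \<in> \<Union> {{U. openin Tf U} | Tf. topological_group (free_group (topspace X)) Tf \<and> continuous_map X Tf free_gen}"
  then obtain Tf where "Tf \<in> famFM X" "openin Tf U" unfolding in_FM_basis by blast
  then have "openin X {x \<in> topspace X. free_gen x \<in> U}" unfolding famFM_def continuous_map_def by blast
  moreover have "{x \<in> topspace X. free_gen x \<in> U} = free_gen -` U \<inter> topspace X" by auto
  ultimately show "openin X (free_gen -` U \<inter> topspace X)" by simp
next
  show "free_gen ` topspace X \<subseteq> \<Union> (\<Union> {{U. openin Tf U} | Tf. topological_group (free_group (topspace X)) Tf \<and> continuous_map X Tf free_gen})"
    using topspace_FM[of X] unfolding FM_top_def by (simp add: image_subset_iff free_gen_carrier)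
qed

lemma FM_mult_cont:
  "continuous_map (prod_topology (FM_top X) (FM_top X)) (FM_top X) (\<lambda>(v,w). v \<otimes>\<^bsub>free_group (topspace X)\<^esub> w)"
  (is "continuous_map ?P _ ?m")
proof -
  let ?F = "free_group (topspace X)"
  have "continuous_map ?P (topology_generated_by (\<Union> {{U. openin Tf U} | Tf. topological_group (free_group (topspace X)) Tf \<and> continuous_map X Tf free_gen})) ?m"
  proof (rule continuous_on_generated_topo)
    fix U assume "U \<in> \<Union> {{U. openin Tf U} | Tf. topological_group (free_group (topspace X)) Tf \<and> continuous_map X Tf free_gen}"
    then obtain Tf where Tf: "Tf \<in> famFM X" "openin Tf U" unfolding in_FM_basis by blast
    then have "continuous_map (prod_topology Tf Tf) Tf ?m" unfolding famFM_def topological_group_def by blast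
    then have "openin (prod_topology Tf Tf) {z \<in> topspace (prod_topology Tf Tf). ?m z \<in> U}"
      using Tf unfolding continuous_map_def by blast
    then have "openin ?P {z \<in> topspace (prod_topology Tf Tf). ?m z \<in> U}"
      by (rule prod_mono_open[rotated 2]) (use fm_basis[OF Tf(1)] in auto)
    moreover have "{z \<in> topspace (prod_topology Tf Tf). ?m z \<in> U} = ?m -` U \<inter> topspace ?P"
      using fam_top[OF Tf(1)] topspace_FM[of X] by auto
    ultimately show "openin ?P (?m -` U \<inter> topspace ?P)" by simp
  next
    show "?m ` topspace ?P \<subseteq> \<Union> (\<Union> {{U. openin Tf U} | Tf. topological_group (free_group (topspace X)) Tf \<and> continuous_map X Tf free_gen})"
      using topspace_FM[of X] grp_m_closed[OF group_free_group] unfolding FM_top_def by auto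
  qed
  then show ?thesis unfolding FM_top_def .
qed

lemma FM_right_cont:
  assumes "c \<in> carrier (free_group (topspace X))"
  shows "continuous_map (FM_top X) (FM_top X) (\<lambda>x. x \<otimes>\<^bsub>free_group (topspace X)\<^esub> c)"
proof -
  have "continuous_map (FM_top X) (prod_topology (FM_top X) (FM_top X)) (\<lambda>x. (x, c))"
    using assms by (intro continuous_map_pairedI) (simp_all add: topspace_FM)
  from continuous_map_compose[OF this FM_mult_cont] show ?thesis by (simp add: o_def)
qed



context
  fixes G :: "'g monoid" and T :: "'g topology"
  assumes grp: "group G" and ts: "topspace T = carrier G"
begin

private abbreviation "FG \<equiv> free_group (carrier G)"

lemma hom_m: "group_hom FG G (mult_epi G)"
  using mgroup.mult_epi_group_hom[of G] grp by (simp add: mgroup_def)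

lemma grpF: "group FG" by (rule group_free_group)

lemma FM_ts: "topspace (FM_top T) = carrier FG"
  using topspace_FM[of T] ts by simp

lemma m_closed: "w \<in> carrier FG \<Longrightarrow> mult_epi G w \<in> carrier G"
  using group_hom.hom_closed[OF hom_m] by blast

lemma openin_tau: "openin (tau_top G T) U \<longleftrightarrow> U \<subseteq> carrier G \<and> openin (FM_top T) {w \<in> carrier FG. mult_epi G w \<in> U}"
  by (simp add: tau_top_def openin_quotient FM_ts)

lemma topspace_tau: "topspace (tau_top G T) = carrier G"
  unfolding tau_top_def by (rule topspace_quotient) (auto simp: FM_ts m_closed)

lemma tau_le_T: "openin (tau_top G T) U \<Longrightarrow> openin T U"
proof -
  assume U: "openin (tau_top G T) U"
  let ?W = "{w \<in> carrier FG. mult_epi G w \<in> U}"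
  have "openin (FM_top T) ?W" and sub: "U \<subseteq> carrier G" using U by (auto simp: openin_tau)
  then have "openin T {x \<in> topspace T. free_gen x \<in> ?W}"
    using free_gen_cont[of T] unfolding continuous_map_def by blast
  moreover have "{x \<in> topspace T. free_gen x \<in> ?W} = U"
    using sub free_gen_carrier[of _ "carrier G"] mgroup.mult_epi_free_gen[of G] grp
    by (auto simp: ts mgroup_def)
  ultimately show ?thesis by simp
qed

lemma image_open:
  assumes V: "openin (FM_top T) V"
  shows "openin (tau_top G T) (mult_epi G ` V)"
proof -
  have Vc: "V \<subseteq> carrier FG" using openin_subset[OF V] FM_ts by simp
  let ?Q = "{w \<in> carrier FG. mult_epi G w \<in> mult_epi G ` V}"
  have "openin (FM_top T) ?Q"
    unfolding openin_subopen[of _ ?Q]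
  proof
    fix w assume w: "w \<in> ?Q"
    then obtain v where v: "v \<in> V" "mult_epi G w = mult_epi G v" by auto
    have wc: "w \<in> carrier FG" using w by simp
    have vc: "v \<in> carrier FG" using v Vc by auto
    define k where "k = inv\<^bsub>FG\<^esub> w \<otimes>\<^bsub>FG\<^esub> v"
    have kc: "k \<in> carrier FG" unfolding k_def using wc vc grpF by (simp add: group.inv_closed grp_m_closed)
    have mk: "mult_epi G k = \<one>\<^bsub>G\<^esub>"
    proof -
      have "mult_epi G k = inv\<^bsub>G\<^esub> (mult_epi G w) \<otimes>\<^bsub>G\<^esub> mult_epi G v"
        unfolding k_def using wc vc
        by (simp add: group_hom.hom_mult[OF hom_m] group_hom.hom_inv[OF hom_m] group.inv_closed[OF grpF])
      then show ?thesis using v(2) group.l_inv[OF grp] m_closed[OF vc] by simp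
    qed
    let ?O = "{x \<in> topspace (FM_top T). x \<otimes>\<^bsub>FG\<^esub> k \<in> V}"
    have "openin (FM_top T) ?O"
      using FM_right_cont[of k T] kc V ts unfolding continuous_map_def by auto
    moreover have "w \<in> ?O"
    proof -
      have "w \<otimes>\<^bsub>FG\<^esub> k = v" unfolding k_def using wc vc grpF
        by (simp add: group.inv_closed grp_m_assoc[symmetric] group.r_inv grp_one_closed
              group.is_monoid monoid.l_one)
      then show ?thesis using wc v FM_ts by simp
    qed
    moreover have "?O \<subseteq> ?Q"
    proof
      fix x assume x: "x \<in> ?O"
      then have xc: "x \<in> carrier FG" using FM_ts by simp
      have "mult_epi G (x \<otimes>\<^bsub>FG\<^esub> k) = mult_epi G x"
        using xc kc mk hom_m grp m_closed by (simp add: group_hom.hom_mult grp_r_one)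
      then show "x \<in> ?Q" using x xc by (metis (mono_tags, lifting) image_eqI mem_Collect_eq)
    qed
    ultimately show "\<exists>Ob. openin (FM_top T) Ob \<and> w \<in> Ob \<and> Ob \<subseteq> ?Q" by blast
  qed
  moreover have "mult_epi G ` V \<subseteq> carrier G" using Vc m_closed by auto
  ultimately show ?thesis by (simp add: openin_tau)
qed

lemma tau_mult_cont: "continuous_map (prod_topology (tau_top G T) (tau_top G T)) (tau_top G T) (\<lambda>(x,y). x \<otimes>\<^bsub>G\<^esub> y)"
  unfolding continuous_map_def
proof (intro conjI allI impI)
  show "(\<lambda>(x,y). x \<otimes>\<^bsub>G\<^esub> y) \<in> topspace (prod_topology (tau_top G T) (tau_top G T)) \<rightarrow> topspace (tau_top G T)"
    by (auto simp: topspace_tau grp_m_closed[OF grp])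
  fix U assume U: "openin (tau_top G T) U"
  let ?Z = "{z \<in> topspace (prod_topology (tau_top G T) (tau_top G T)). (\<lambda>(x,y). x \<otimes>\<^bsub>G\<^esub> y) z \<in> U}"
  let ?W = "{w \<in> carrier FG. mult_epi G w \<in> U}"
  have W: "openin (FM_top T) ?W" using U by (simp add: openin_tau)
  let ?mF = "\<lambda>(v,w). v \<otimes>\<^bsub>FG\<^esub> w"
  let ?M = "{z \<in> topspace (prod_topology (FM_top T) (FM_top T)). ?mF z \<in> ?W}"
  have M: "openin (prod_topology (FM_top T) (FM_top T)) ?M"
    using FM_mult_cont[of T] W ts unfolding continuous_map_def by auto
  show "openin (prod_topology (tau_top G T) (tau_top G T)) ?Z"
    unfolding openin_prod_topology_alt
  proof (intro allI impI)
    fix a b assume ab: "(a,b) \<in> ?Z"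
    then have ac: "a \<in> carrier G" and bc: "b \<in> carrier G" and abU: "a \<otimes>\<^bsub>G\<^esub> b \<in> U"
      by (auto simp: topspace_tau)
    have fa: "free_gen a \<in> carrier FG" "free_gen b \<in> carrier FG" using free_gen_carrier[OF ac] free_gen_carrier[OF bc] by auto
    have ma: "mult_epi G (free_gen a) = a" "mult_epi G (free_gen b) = b"
      using ac bc mgroup.mult_epi_free_gen[of G] grp by (auto simp: mgroup_def)
    have fM: "(free_gen a, free_gen b) \<in> ?M"
      using fa ma abU hom_m grpF by (simp add: FM_ts group_hom.hom_mult grp_m_closed)
    have "\<exists>Va Vb. openin (FM_top T) Va \<and> openin (FM_top T) Vb \<and> free_gen a \<in> Va \<and> free_gen b \<in> Vb \<and> Va \<times> Vb \<subseteq> ?M"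
      by (rule iffD1[OF openin_prod_topology_alt M, rule_format, OF fM])
    then obtain Va Vb where VV: "openin (FM_top T) Va" "openin (FM_top T) Vb" "free_gen a \<in> Va" "free_gen b \<in> Vb" "Va \<times> Vb \<subseteq> ?M"
      by blast
    show "\<exists>A B. openin (tau_top G T) A \<and> openin (tau_top G T) B \<and> a \<in> A \<and> b \<in> B \<and> A \<times> B \<subseteq> ?Z"
    proof (intro exI conjI)
      show "openin (tau_top G T) (mult_epi G ` Va)" "openin (tau_top G T) (mult_epi G ` Vb)"
        by (rule image_open[OF VV(1)], rule image_open[OF VV(2)])
      show "a \<in> mult_epi G ` Va" "b \<in> mult_epi G ` Vb"
        by (rule image_eqI[where f="mult_epi G", OF ma(1)[symmetric] VV(3)], rule image_eqI[where f="mult_epi G", OF ma(2)[symmetric] VV(4)])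
      show "mult_epi G ` Va \<times> mult_epi G ` Vb \<subseteq> ?Z"
      proof
        fix p assume "p \<in> mult_epi G ` Va \<times> mult_epi G ` Vb"
        then obtain v w where p: "p = (mult_epi G v, mult_epi G w)" and vw: "v \<in> Va" "w \<in> Vb" by blast
        then have "(v,w) \<in> ?M" using subsetD[OF VV(5)] by blast
        then have vc: "v \<in> carrier FG" and wc: "w \<in> carrier FG" and "mult_epi G (v \<otimes>\<^bsub>FG\<^esub> w) \<in> U"
          by (auto simp: FM_ts)
        then show "p \<in> ?Z"
          unfolding p using hom_m by (simp add: topspace_tau group_hom.hom_mult m_closed)
      qed
    qed
  qed
qed

end



lemma seq_cases:
  fixes i :: "'i::wellorder"
  obtains (min) "\<forall>j. \<not> j < i"
  | (suc) p where "p < i" "\<not> (\<exists>k. p < k \<and> k < i)"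
  | (lim) "\<exists>j. j < i" "\<forall>j. j < i \<longrightarrow> (\<exists>k. j < k \<and> k < i)"
  by blast

lemma all_qt:
  fixes S :: "'i::wellorder \<Rightarrow> 'g topology"
  assumes qt: "quasitopological_group G T" and seq: "transfinite_seq G T S"
  shows "quasitopological_group G (S i)"
proof (induction i rule: less_induct)
  case (less i)
  show ?case
  proof (cases i rule: seq_cases)
    case min then show ?thesis using seq qt by (simp add: transfinite_seq_def)
  next
    case (suc p)
    then have "S i = c_top G (S p)" using seq by (simp add: transfinite_seq_def)
    then show ?thesis using c_top_qt[OF less[OF suc(1)]] by simp
  next
    case lim
    then have "S i = topology (\<lambda>U. \<forall>j. j < i \<longrightarrow> openin (S j) U)" using seq by (simp add: transfinite_seq_def)
    then show ?thesis using lim_qt[of "\<lambda>j. j < i" G S] lim less by simp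
  qed
qed

lemma decr:
  fixes S :: "'i::wellorder \<Rightarrow> 'g topology"
  assumes qt: "quasitopological_group G T" and seq: "transfinite_seq G T S"
  shows "j \<le> i \<Longrightarrow> openin (S i) U \<Longrightarrow> openin (S j) U"
proof (induction i arbitrary: j rule: less_induct)
  case (less i)
  show ?case
  proof (cases "j = i")
    case True then show ?thesis using less by simp
  next
    case False
    then have ji: "j < i" using less.prems by simp
    show ?thesis
    proof (cases i rule: seq_cases)
      case min then show ?thesis using ji by blast
    next
      case (suc p)
      then have "S i = c_top G (S p)" using seq by (simp add: transfinite_seq_def)
      then have "openin (S p) U" using c_top_coarser[OF all_qt[OF qt seq, of p]] less.prems by simp
      moreover have "j \<le> p" using suc ji by (meson not_le)
      ultimately show ?thesis using less.IH suc by blast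
    next
      case lim
      then have "S i = topology (\<lambda>U. \<forall>j. j < i \<longrightarrow> openin (S j) U)" using seq by (simp add: transfinite_seq_def)
      then show ?thesis using less.prems ji by (simp add: openin_inter_top)
    qed
  qed
qed

lemma tau_below:
  fixes S :: "'i::wellorder \<Rightarrow> 'g topology"
  assumes qt: "quasitopological_group G T" and seq: "transfinite_seq G T S"
  shows "openin (tau_top G T) U \<Longrightarrow> openin (S i) U"
proof (induction i arbitrary: U rule: less_induct)
  case (less i)
  have grp: "group G" using qt by (rule qt_group)
  have ts: "topspace T = carrier G" using qt by (rule qt_top)
  show ?case
  proof (cases i rule: seq_cases)
    case min then show ?thesis using seq tau_le_T[OF grp ts] less.prems by (simp add: transfinite_seq_def)
  next
    case (suc p)
    then have Si: "S i = c_top G (S p)" using seq by (simp add: transfinite_seq_def)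
    have tsp: "topspace (S p) = carrier G" using all_qt[OF qt seq] qt_top by blast
    have "openin (prod_topology (tau_top G T) (tau_top G T))
       {z \<in> topspace (prod_topology (tau_top G T) (tau_top G T)). (\<lambda>(x,y). x \<otimes>\<^bsub>G\<^esub> y) z \<in> U}"
      using tau_mult_cont[OF grp ts] less.prems unfolding continuous_map_def by blast
    then have "openin (prod_topology (S p) (S p))
       {z \<in> topspace (prod_topology (tau_top G T) (tau_top G T)). (\<lambda>(x,y). x \<otimes>\<^bsub>G\<^esub> y) z \<in> U}"
    proof -
      have IHp: "\<And>V. openin (tau_top G T) V \<Longrightarrow> openin (S p) V" using less.IH suc(1) by blast
      show ?thesis by (rule prod_mono_open[OF IHp IHp \<open>openin (prod_topology (tau_top G T) (tau_top G T)) _\<close>])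
    qed
    then have "openin (prod_topology (S p) (S p))
       {z \<in> topspace (prod_topology (S p) (S p)). (\<lambda>(x,y). x \<otimes>\<^bsub>G\<^esub> y) z \<in> U}"
      by (simp add: topspace_tau[OF grp ts] tsp)
    moreover have "U \<subseteq> carrier G" using openin_subset[OF less.prems] topspace_tau[OF grp ts] by simp
    ultimately show ?thesis using Si by (simp add: openin_c_top)
  next
    case lim
    then have "S i = topology (\<lambda>U. \<forall>j. j < i \<longrightarrow> openin (S j) U)" using seq by (simp add: transfinite_seq_def)
    then show ?thesis using less by (simp add: openin_inter_top)
  qed
qed



lemma stable:
  fixes S :: "'i::wellorder \<Rightarrow> 'g topology"
  assumes qt: "quasitopological_group G T" and seq: "transfinite_seq G T S"
    and ni: "\<nexists>f :: 'i \<Rightarrow> 'g topology. inj f"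
  shows "\<exists>a. c_top G (S a) = S a"
proof -
  obtain a b where ab: "a < b" "S a = S b"
  proof -
    obtain x y where "x \<noteq> y" "S x = S y" using ni unfolding inj_def by blast
    then show ?thesis using that by (metis linorder_neqE)
  qed
  define s where "s = (LEAST k. a < k)"
  have as: "a < s" unfolding s_def using ab(1) by (rule LeastI)
  have sb: "s \<le> b" unfolding s_def using ab(1) by (rule Least_le)
  have nk: "\<not> (\<exists>k. a < k \<and> k < s)" unfolding s_def using not_less_Least by blast
  have Ss: "S s = c_top G (S a)" using seq as nk by (simp add: transfinite_seq_def)
  have "S s = S a"
    unfolding topology_eq
  proof (intro allI iffI)
    fix U assume "openin (S s) U" then show "openin (S a) U" using decr[OF qt seq less_imp_le[OF as]] by simp
  next
    fix U assume "openin (S a) U" then have "openin (S b) U" using ab by simp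
    then show "openin (S s) U" using decr[OF qt seq] sb by blast
  qed
  then show ?thesis using Ss by auto
qed

lemma stable_tg:
  assumes qt: "quasitopological_group G H" and st: "c_top G H = H"
  shows "continuous_map (prod_topology H H) H (\<lambda>(x,y). x \<otimes>\<^bsub>G\<^esub> y)"
  unfolding continuous_map_def
proof (intro conjI allI impI)
  have grp: "group G" using qt by (rule qt_group)
  have ts: "topspace H = carrier G" using qt by (rule qt_top)
  show "(\<lambda>(x,y). x \<otimes>\<^bsub>G\<^esub> y) \<in> topspace (prod_topology H H) \<rightarrow> topspace H"
    by (auto simp: ts grp_m_closed[OF grp])
  fix U assume "openin H U"
  then have "openin (c_top G H) U" using st by simp
  then show "openin (prod_topology H H) {x \<in> topspace (prod_topology H H). (\<lambda>(x,y). x \<otimes>\<^bsub>G\<^esub> y) x \<in> U}"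
    by (simp add: openin_c_top)
qed

lemma H_le_tau:
  assumes qt: "quasitopological_group G T" and qH: "quasitopological_group G H"
    and st: "c_top G H = H" and HT: "\<And>U. openin H U \<Longrightarrow> openin T U"
    and U: "openin H U"
  shows "openin (tau_top G T) U"
proof -
  have grp: "group G" using qt by (rule qt_group)
  have ts: "topspace T = carrier G" using qt by (rule qt_top)
  have tsH: "topspace H = carrier G" using qH by (rule qt_top)
  let ?F = "free_group (carrier G)"
  let ?m = "mult_epi G"
  define Tf where "Tf = pullback_topology (carrier ?F) ?m H"
  have hom: "group_hom ?F G ?m" using hom_m[OF grp ts] .
  have tsTf: "topspace Tf = carrier ?F"
    unfolding Tf_def topspace_pullback_topology tsH using m_closed[OF grp ts] by auto
  have mc: "continuous_map Tf H ?m"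
    using continuous_map_pullback[OF continuous_map_id, of "carrier ?F" ?m H] by (simp add: Tf_def o_def)
  have mult: "continuous_map (prod_topology Tf Tf) Tf (\<lambda>(v,w). v \<otimes>\<^bsub>?F\<^esub> w)"
    unfolding Tf_def
  proof (rule continuous_map_pullback')
    have c1: "continuous_map (prod_topology Tf Tf) (prod_topology H H) (\<lambda>z. (?m (fst z), ?m (snd z)))"
      by (intro continuous_map_pairedI continuous_map_compose[OF continuous_map_fst mc, unfolded o_def]
          continuous_map_compose[OF continuous_map_snd mc, unfolded o_def])
    have c2: "continuous_map (prod_topology Tf Tf) H ((\<lambda>(x,y). x \<otimes>\<^bsub>G\<^esub> y) \<circ> (\<lambda>z. (?m (fst z), ?m (snd z))))"
      by (rule continuous_map_compose[OF c1 stable_tg[OF qH st]])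
    show "continuous_map (prod_topology (pullback_topology (carrier ?F) ?m H) (pullback_topology (carrier ?F) ?m H)) H (?m \<circ> (\<lambda>(v,w). v \<otimes>\<^bsub>?F\<^esub> w))"
      unfolding Tf_def[symmetric]
    proof (rule continuous_map_eq[OF c2])
      fix z assume "z \<in> topspace (prod_topology Tf Tf)"
      then show "((\<lambda>(x,y). x \<otimes>\<^bsub>G\<^esub> y) \<circ> (\<lambda>z. (?m (fst z), ?m (snd z)))) z = (?m \<circ> (\<lambda>(v,w). v \<otimes>\<^bsub>?F\<^esub> w)) z"
        using hom tsTf by (auto simp: group_hom.hom_mult)
    qed
    show "topspace (prod_topology (pullback_topology (carrier ?F) ?m H) (pullback_topology (carrier ?F) ?m H)) \<subseteq> (\<lambda>(v,w). v \<otimes>\<^bsub>?F\<^esub> w) -` carrier ?F"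
      unfolding Tf_def[symmetric] using tsTf grp_m_closed[OF group_free_group] by auto
  qed
  have inv: "continuous_map Tf Tf (\<lambda>w. inv\<^bsub>?F\<^esub> w)"
    unfolding Tf_def
  proof (rule continuous_map_pullback')
    have invH: "continuous_map H H (\<lambda>x. inv\<^bsub>G\<^esub> x)" using qH by (simp add: quasitopological_group_def)
    show "continuous_map (pullback_topology (carrier ?F) ?m H) H (?m \<circ> (\<lambda>w. inv\<^bsub>?F\<^esub> w))"
      unfolding Tf_def[symmetric]
    proof (rule continuous_map_eq[OF continuous_map_compose[OF mc invH]])
      fix w assume "w \<in> topspace Tf"
      then show "((\<lambda>x. inv\<^bsub>G\<^esub> x) \<circ> ?m) w = (?m \<circ> (\<lambda>w. inv\<^bsub>?F\<^esub> w)) w"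
        using hom tsTf by (auto simp: group_hom.hom_inv)
    qed
    show "topspace (pullback_topology (carrier ?F) ?m H) \<subseteq> (\<lambda>w. inv\<^bsub>?F\<^esub> w) -` carrier ?F"
      unfolding Tf_def[symmetric] using tsTf group.inv_closed[OF group_free_group] by auto
  qed
  have fg: "continuous_map T Tf free_gen"
    unfolding Tf_def
  proof (rule continuous_map_pullback')
    have idc: "continuous_map T H (\<lambda>x. x)" by (rule continuous_coarser) (use HT ts tsH in auto)
    show "continuous_map T H (?m \<circ> free_gen)"
    proof (rule continuous_map_eq[OF idc])
      fix x assume "x \<in> topspace T"
      then show "x = (?m \<circ> free_gen) x"
        using ts mgroup.mult_epi_free_gen[of G x] grp by (simp add: mgroup_def)
    qed
    show "topspace T \<subseteq> free_gen -` carrier ?F" using ts free_gen_carrier by auto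
  qed
  have fam: "Tf \<in> famFM T"
    unfolding famFM_def topological_group_def group_with_topology_def
    using group_free_group tsTf mult inv fg ts by auto
  have "openin Tf (?m -` U \<inter> carrier ?F)"
    unfolding Tf_def openin_pullback_topology using U by blast
  then have "openin (FM_top T) (?m -` U \<inter> carrier ?F)" by (rule fm_basis[OF fam])
  moreover have "?m -` U \<inter> carrier ?F = {w \<in> carrier ?F. ?m w \<in> U}" by auto
  moreover have "U \<subseteq> carrier G" using openin_subset[OF U] tsH by simp
  ultimately show ?thesis by (simp add: openin_tau[OF grp ts])
qed

theorem theorem3p8:
  fixes G :: "'g monoid" and T :: "'g topology" and S :: "'i::wellorder \<Rightarrow> 'g topology"
  assumes "quasitopological_group G T"
    and "transfinite_seq G T S"
  shows "(\<forall>i. quasitopological_group G (S i))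
       \<and> ((\<nexists>f :: 'i \<Rightarrow> 'g topology. inj f) \<longrightarrow> (\<exists>i. S i = tau_top G T))"
proof (intro conjI allI impI)
  note qt = assms(1) and seq = assms(2)
  show "quasitopological_group G (S i)" for i by (rule all_qt[OF qt seq])
  assume ni: "\<nexists>f :: 'i \<Rightarrow> 'g topology. inj f"
  obtain a where st: "c_top G (S a) = S a" using stable[OF qt seq ni] by blast
  define j0 :: 'i where "j0 = (LEAST k. True)"
  have j0min: "\<forall>j. \<not> j < j0" unfolding j0_def by (meson not_less_Least)
  have Sj0: "S j0 = T" using seq j0min by (simp add: transfinite_seq_def)
  have j0a: "j0 \<le> a" using j0min by (meson not_le)
  have HT: "\<And>U. openin (S a) U \<Longrightarrow> openin T U" using decr[OF qt seq j0a] Sj0 by simp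
  have "S a = tau_top G T"
    unfolding topology_eq
  proof (intro allI iffI)
    fix U assume "openin (S a) U"
    then show "openin (tau_top G T) U" using H_le_tau[OF qt all_qt[OF qt seq, of a] st HT] by blast
  next
    fix U assume "openin (tau_top G T) U"
    then show "openin (S a) U" by (rule tau_below[OF qt seq])
  qed
  then show "\<exists>i. S i = tau_top G T" by blast
qed

end
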